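(* In the setting where $X_N\in\mathbb{R}^{N\times M}$ (rows $x_n^\top$), $Y_N\in\mathbb{R}^N$, $x\in\mathbb{R}^M$, $\lambda>0$, $\sigma>0$, $w(\theta)=\exp\{-\frac{\lambda}{2\sigma^2}\|\theta\|^2\}$, $P_\lambda=(X_N^\top X_N+\lambda I)^{-1}$, $K_\lambda=1+x^\top P_\lambda x$, $\hat\theta_\lambda=P_\lambda X_N^\top Y_N$, and $\hat\theta_y=\arg\min_\theta\big[\sum_{n}(y_n-\theta^\top x_n)^2+(y-\theta^\top x)^2+\lambda\|\theta\|^2\big]$, the LpNML distribution $$q_{\mathrm{LpNML}}(y\mid x)=\frac{p_{\hat\theta_y}(y\mid x)\,w(\hat\theta_y)}{\int_{\mathbb{R}}p_{\hat\theta_{y'}}(y'\mid x)\,w(\hat\theta_{y'})\,dy'}$$ is the Gaussian $\mathcal{N}\big(\hat\theta_\lambda^\top x-\hat\mu,\ \hat\sigma^2\big)$, where $$\hat\mu=\frac{\lambda K_\lambda\,\hat\theta_\lambda^\top P_\lambda x}{1+\lambda x^\top P_\lambda^2x},\qquad \hat\sigma^2=\frac{\sigma^2K_\lambda^2}{1+\lambda x^\top P_\lambda^2x}.$$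
   Context: $p_\theta(y\mid x)=\frac{1}{\sqrt{2\pi\sigma^2}}\exp\{-\frac{1}{2\sigma^2}(y-\theta^\top x)^2\}$. *)

theory Defs
  imports "HOL-Probability.Probability"
begin

definition gauss_model :: "real \<Rightarrow> real ^ 'm \<Rightarrow> real \<Rightarrow> real ^ 'm \<Rightarrow> real" where
  "gauss_model \<sigma> \<theta> y x = 1 / sqrt (2 * pi * \<sigma>\<^sup>2) * exp (- (1 / (2 * \<sigma>\<^sup>2)) * (y - \<theta> \<bullet> x)\<^sup>2)"

definition prior_w :: "real \<Rightarrow> real \<Rightarrow> real ^ 'm \<Rightarrow> real" where
  "prior_w lam \<sigma> \<theta> = exp (- (lam / (2 * \<sigma>\<^sup>2)) * (norm \<theta>)\<^sup>2)"

definition ridge_obj :: "real ^ 'm ^ 'n \<Rightarrow> real ^ 'n \<Rightarrow> real ^ 'm \<Rightarrow> real \<Rightarrow> real \<Rightarrow> real ^ 'm \<Rightarrow> real" where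
  "ridge_obj X Y x y lam \<theta> =
     (\<Sum>n\<in>UNIV. (Y $ n - \<theta> \<bullet> (X $ n))\<^sup>2) + (y - \<theta> \<bullet> x)\<^sup>2 + lam * (norm \<theta>)\<^sup>2"

definition theta_y :: "real ^ 'm ^ 'n \<Rightarrow> real ^ 'n \<Rightarrow> real ^ 'm \<Rightarrow> real \<Rightarrow> real \<Rightarrow> real ^ 'm" where
  "theta_y X Y x y lam = (SOME \<theta>. \<forall>\<theta>'. ridge_obj X Y x y lam \<theta> \<le> ridge_obj X Y x y lam \<theta>')"

definition q_LpNML :: "real ^ 'm ^ 'n \<Rightarrow> real ^ 'n \<Rightarrow> real \<Rightarrow> real \<Rightarrow> real ^ 'm \<Rightarrow> real \<Rightarrow> real" where
  "q_LpNML X Y lam \<sigma> x y =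
     gauss_model \<sigma> (theta_y X Y x y lam) y x * prior_w lam \<sigma> (theta_y X Y x y lam) /
     (LBINT y'. gauss_model \<sigma> (theta_y X Y x y' lam) y' x * prior_w lam \<sigma> (theta_y X Y x y' lam))"

end

theory Submission
  imports Defs
begin

lemma matrix_facts:
  fixes X :: "real ^ 'm ^ 'n" and lam :: real
  assumes lam: "lam > 0"
  defines "A \<equiv> transpose X ** X + lam *\<^sub>R mat 1"
  defines "P \<equiv> matrix_inv A"
  shows "\<And>v. A *v v = (X *v v) v* X + lam *\<^sub>R v"
    and "\<And>v. A *v (P *v v) = v" and "\<And>v. P *v (A *v v) = v"
    and "\<And>u v. (P *v u) \<bullet> v = u \<bullet> (P *v v)"
    and "\<And>v. v \<bullet> (A *v v) = (X *v v) \<bullet> (X *v v) + lam * (v \<bullet> v)"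
proof -
  have Av: "A *v v = (X *v v) v* X + lam *\<^sub>R v" for v
  proof -
    have "(lam *\<^sub>R mat 1) *v v = lam *\<^sub>R v"
      by (simp add: vec_eq_iff matrix_vector_mult_def mat_def if_distrib if_distribR cong: if_cong)
    then show ?thesis unfolding A_def
      by (simp add: matrix_vector_mult_add_rdistrib matrix_vector_mul_assoc[symmetric])
  qed
  show "A *v v = (X *v v) v* X + lam *\<^sub>R v" for v by (rule Av)
  have vAv: "v \<bullet> (A *v v) = (X *v v) \<bullet> (X *v v) + lam * (v \<bullet> v)" for v
    by (simp add: Av inner_add_right dot_lmul_matrix inner_commute[of v "_ v* X"])
  show "v \<bullet> (A *v v) = (X *v v) \<bullet> (X *v v) + lam * (v \<bullet> v)" for v by (rule vAv)
  have ker: "\<forall>v. A *v v = 0 \<longrightarrow> v = 0"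
  proof (intro allI impI)
    fix v assume "A *v v = 0"
    then have "(X *v v) \<bullet> (X *v v) + lam * (v \<bullet> v) = 0" using vAv[of v] by simp
    moreover have "(X *v v) \<bullet> (X *v v) \<ge> 0" "v \<bullet> v \<ge> 0" by auto
    ultimately have "lam * (v \<bullet> v) = 0" using lam
      by (smt (verit) mult_nonneg_nonneg)
    then show "v = 0" using lam by simp
  qed
  then have "invertible A"
    using matrix_left_invertible_ker invertible_left_inverse by blast
  then have PA: "A ** P = mat 1 \<and> P ** A = mat 1"
    unfolding P_def matrix_inv_def invertible_def by (rule someI_ex)
  have symA: "transpose A = A"
    unfolding A_def
    by (simp add: vec_eq_iff transpose_def matrix_matrix_mult_def mat_def mult.commute)
  have "A ** transpose P = mat 1"
    using PA by (metis matrix_transpose_mul symA transpose_mat)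
  then have symP: "transpose P = P"
    using PA by (metis matrix_mul_assoc matrix_mul_lid matrix_mul_rid)
  show "A *v (P *v v) = v" for v using PA by (simp add: matrix_vector_mul_assoc)
  show "P *v (A *v v) = v" for v using PA by (simp add: matrix_vector_mul_assoc)
  show "(P *v u) \<bullet> v = u \<bullet> (P *v v)" for u v
    by (metis dot_lmul_matrix symP transpose_matrix_vector)
qed

lemma alg:
  fixes K D sg lam r B p2 T :: real
  assumes "K \<noteq> 0" "D = 1 + lam*p2" "D \<noteq> 0" "sg \<noteq> 0"
  shows "-(1/(2 * sg\<^sup>2)) * (r/K)\<^sup>2 + -(lam/(2 * sg\<^sup>2)) * (T + 2*(r/K)*B + (r/K)\<^sup>2*p2)
     = -(r + lam*K*B/D)\<^sup>2/(2 * (sg\<^sup>2*K\<^sup>2/D)) + (-(lam/(2 * sg\<^sup>2))*T + lam\<^sup>2*B\<^sup>2/(2 * sg\<^sup>2*D))"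
proof -
  have 1: "-(r + lam*K*B/D)\<^sup>2/(2 * (sg\<^sup>2*K\<^sup>2/D)) = -(((r/K + lam*B/D)\<^sup>2 * D)/(2 * sg\<^sup>2))"
    using assms by (simp add: field_simps power2_eq_square)
  have 2: "(r/K + lam*B/D)\<^sup>2 * D = (r/K)\<^sup>2*D + 2*(r/K)*lam*B + lam\<^sup>2*B\<^sup>2/D"
    using assms(1,3) by (simp add: power2_eq_square field_simps)
  have 3: "(r/K)\<^sup>2*D = (r/K)\<^sup>2 + lam*p2*(r/K)\<^sup>2" unfolding assms(2) by algebra
  have 4: "lam\<^sup>2*B\<^sup>2/(2 * sg\<^sup>2*D) = (lam\<^sup>2*B\<^sup>2/D)/(2 * sg\<^sup>2)" by simp
  have gen: "\<And>t u. -(1/(2 * sg\<^sup>2)) * t\<^sup>2 + -(lam/(2 * sg\<^sup>2)) * (T + 2*t*B + t\<^sup>2*p2)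
     = -((t\<^sup>2 + lam*p2*t\<^sup>2 + 2*t*lam*B + u)/(2 * sg\<^sup>2)) + (-(lam/(2 * sg\<^sup>2))*T + u/(2 * sg\<^sup>2))"
    using assms(4) by (simp add: field_simps)
  show ?thesis unfolding 1 2 3 4 by (rule gen)
qed

lemma ridge_alt:
  "ridge_obj X Y x y lam \<theta> = (Y - X *v \<theta>) \<bullet> (Y - X *v \<theta>) + (y - \<theta> \<bullet> x)\<^sup>2 + lam * (\<theta> \<bullet> \<theta>)"
proof -
  have "(\<Sum>n\<in>UNIV. (Y $ n - \<theta> \<bullet> (X $ n))\<^sup>2) = (Y - X *v \<theta>) \<bullet> (Y - X *v \<theta>)"
    unfolding inner_vec_def[of "Y - X *v \<theta>"]
    by (simp add: matrix_vector_mul_component power2_eq_square inner_commute[of \<theta>])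
  moreover have "(norm \<theta>)\<^sup>2 = \<theta> \<bullet> \<theta>" by (simp add: power2_norm_eq_inner)
  ultimately show ?thesis unfolding ridge_obj_def by simp
qed

lemma expand:
  fixes X :: "real ^ 'm ^ 'n" and Y :: "real ^ 'n" and x t d :: "real ^ 'm"
  shows "ridge_obj X Y x y lam (t + d) = ridge_obj X Y x y lam t
     - 2 * ((((Y - X *v t) v* X) + (y - t \<bullet> x) *\<^sub>R x - lam *\<^sub>R t) \<bullet> d)
     + (X *v d) \<bullet> (X *v d) + (d \<bullet> x)\<^sup>2 + lam * (d \<bullet> d)"
proof -
  define e where "e = Y - X *v t"
  have 1: "Y - X *v (t + d) = e - X *v d" unfolding e_def by (simp add: matrix_vector_right_distrib)
  have 2: "((e v* X) + (y - t \<bullet> x) *\<^sub>R x - lam *\<^sub>R t) \<bullet> d = e \<bullet> (X *v d) + (y - t \<bullet> x) * (x \<bullet> d) - lam * (t \<bullet> d)"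
    by (simp add: inner_add_left inner_diff_left dot_lmul_matrix)
  have 3: "(e - X *v d) \<bullet> (e - X *v d) = e \<bullet> e - 2 * (e \<bullet> (X *v d)) + (X *v d) \<bullet> (X *v d)"
    by (simp add: inner_diff_left inner_diff_right inner_commute[of "X *v d" e])
  have 4: "(t + d) \<bullet> (t + d) = t \<bullet> t + 2 * (t \<bullet> d) + d \<bullet> d"
    by (simp add: inner_add_left inner_add_right inner_commute[of d t])
  have 5: "(y - (t + d) \<bullet> x)\<^sup>2 = (y - t \<bullet> x)\<^sup>2 - 2 * ((y - t \<bullet> x) * (x \<bullet> d)) + (d \<bullet> x)\<^sup>2"
    by (simp add: inner_add_left inner_commute[of x d] power2_eq_square algebra_simps)
  show ?thesis
    unfolding ridge_alt 1 5 3 4 e_def[symmetric] 2 by (simp add: algebra_simps)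
qed

theorem mainTheorem10:
  fixes X :: "real ^ 'm ^ 'n" and Y :: "real ^ 'n" and x :: "real ^ 'm"
    and lam \<sigma> :: real
  assumes "lam > 0" and "\<sigma> > 0"
  defines "P \<equiv> matrix_inv (transpose X ** X + lam *\<^sub>R mat 1)"
  defines "K \<equiv> 1 + x \<bullet> (P *v x)"
  defines "\<theta>L \<equiv> P *v (transpose X *v Y)"
  defines "\<mu> \<equiv> lam * K * (\<theta>L \<bullet> (P *v x)) / (1 + lam * (x \<bullet> ((P ** P) *v x)))"
  defines "s2 \<equiv> \<sigma>\<^sup>2 * K\<^sup>2 / (1 + lam * (x \<bullet> ((P ** P) *v x)))"
  shows "\<forall>y. q_LpNML X Y lam \<sigma> x y = normal_density (\<theta>L \<bullet> x - \<mu>) (sqrt s2) y"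
proof -
  define A where "A = transpose X ** X + lam *\<^sub>R mat 1"
  note MF = matrix_facts[where X=X, OF assms(1), folded P_def, folded A_def]
  have Av: "\<And>v. A *v v = (X *v v) v* X + lam *\<^sub>R v" by (rule MF(1))
  have APv: "\<And>v. A *v (P *v v) = v" by (rule MF(2))
  have Psym: "\<And>u v. (P *v u) \<bullet> v = u \<bullet> (P *v v)" by (rule MF(4))
  have vAv: "\<And>v. v \<bullet> (A *v v) = (X *v v) \<bullet> (X *v v) + lam * (v \<bullet> v)" by (rule MF(5))
  define pv where "pv = P *v x"
  have xpv: "x \<bullet> pv = pv \<bullet> (A *v pv)" unfolding pv_def APv by (simp add: inner_commute)
  have "x \<bullet> pv \<ge> 0" unfolding xpv vAv using assms(1) by auto
  then have K1: "K \<ge> 1" and Keq: "K = 1 + pv \<bullet> x" unfolding K_def pv_def by (auto simp: inner_commute)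
  define p2 where "p2 = pv \<bullet> pv"
  have p2eq: "x \<bullet> ((P ** P) *v x) = p2"
    unfolding p2_def pv_def matrix_vector_mul_assoc[symmetric] using Psym[of x "P *v x"] by simp
  define D where "D = 1 + lam * p2"
  have D1: "D \<ge> 1" unfolding D_def p2_def using assms(1) by simp
  define B where "B = \<theta>L \<bullet> pv"
  define T where "T = \<theta>L \<bullet> \<theta>L"
  have \<mu>eq: "\<mu> = lam * K * B / D" unfolding \<mu>_def p2eq B_def D_def pv_def by simp
  have s2eq: "s2 = \<sigma>\<^sup>2 * K\<^sup>2 / D" unfolding s2_def p2eq D_def by simp
  have AthL: "A *v \<theta>L = Y v* X" unfolding \<theta>L_def by (simp add: APv)
  define th0 where "th0 y = \<theta>L + ((y - \<theta>L \<bullet> x) / K) *\<^sub>R pv" for y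
  have grad: "((Y - X *v th0 y) v* X) + (y - th0 y \<bullet> x) *\<^sub>R x - lam *\<^sub>R th0 y = 0" for y
  proof -
    define c where "c = (y - \<theta>L \<bullet> x) / K"
    have cK: "c * K = y - \<theta>L \<bullet> x" unfolding c_def using K1 by simp
    have At: "A *v th0 y = Y v* X + c *\<^sub>R x"
      unfolding th0_def c_def[symmetric] by (simp add: matrix_vector_right_distrib matrix_vector_mult_scaleR AthL pv_def APv)
    have tx: "th0 y \<bullet> x = \<theta>L \<bullet> x + c * (K - 1)"
      unfolding th0_def c_def[symmetric] by (simp add: inner_add_left Keq)
    have "(Y - X *v th0 y) v* X = Y v* X - (A *v th0 y - lam *\<^sub>R th0 y)"
      by (simp add: Av vector_matrix_mult_diff_distrib)
    also have "\<dots> = lam *\<^sub>R th0 y - c *\<^sub>R x" unfolding At by simp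
    finally have "((Y - X *v th0 y) v* X) + (y - th0 y \<bullet> x) *\<^sub>R x - lam *\<^sub>R th0 y
       = (y - th0 y \<bullet> x - c) *\<^sub>R x" by (simp add: algebra_simps)
    also have "y - th0 y \<bullet> x - c = 0" unfolding tx using cK by (simp add: algebra_simps)
    finally show ?thesis by simp
  qed
  have thy: "theta_y X Y x y lam = th0 y" for y
  proof -
    have exp0: "ridge_obj X Y x y lam (th0 y + d) = ridge_obj X Y x y lam (th0 y)
       + ((X *v d) \<bullet> (X *v d) + (d \<bullet> x)\<^sup>2 + lam * (d \<bullet> d))" for d
      using expand[of X Y x y lam "th0 y" d] grad[of y] by simp
    have Qpos: "(X *v d) \<bullet> (X *v d) + (d \<bullet> x)\<^sup>2 + lam * (d \<bullet> d) \<ge> lam * (d \<bullet> d)" for d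
      by simp
    have min: "ridge_obj X Y x y lam (th0 y) \<le> ridge_obj X Y x y lam t" for t
      using exp0[of "t - th0 y"] Qpos[of "t - th0 y"] assms(1)
      by (smt (verit) add.commute diff_add_cancel inner_ge_zero mult_nonneg_nonneg)
    show ?thesis unfolding theta_y_def
    proof (rule some_equality)
      show "\<forall>t. ridge_obj X Y x y lam (th0 y) \<le> ridge_obj X Y x y lam t" using min by blast
      fix t assume "\<forall>t'. ridge_obj X Y x y lam t \<le> ridge_obj X Y x y lam t'"
      then have "ridge_obj X Y x y lam t \<le> ridge_obj X Y x y lam (th0 y)" by blast
      then have "lam * ((t - th0 y) \<bullet> (t - th0 y)) \<le> 0"
        using exp0[of "t - th0 y"] Qpos[of "t - th0 y"] by (simp add: algebra_simps)
      then have "(t - th0 y) \<bullet> (t - th0 y) = 0" using assms(1)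
        by (smt (verit) inner_ge_zero mult_pos_pos)
      then show "t = th0 y" by simp
    qed
  qed
  define m where "m = \<theta>L \<bullet> x - \<mu>"
  define E0 where "E0 = -(lam/(2 * \<sigma>\<^sup>2))*T + lam\<^sup>2*B\<^sup>2/(2 * \<sigma>\<^sup>2*D)"
  define Cst where "Cst = sqrt (2 * pi * s2) / sqrt (2 * pi * \<sigma>\<^sup>2) * exp E0"
  have s2pos: "s2 > 0" unfolding s2eq using K1 D1 assms(2) by simp
  have Cpos: "Cst > 0" unfolding Cst_def using s2pos assms(2) by simp
  define g where "g y = gauss_model \<sigma> (th0 y) y x * prior_w lam \<sigma> (th0 y)" for y
  have geq: "g y = Cst * normal_density m (sqrt s2) y" for y
  proof -
    define r where "r = y - \<theta>L \<bullet> x"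
    have tx': "th0 y \<bullet> x = \<theta>L \<bullet> x + (r/K)*(K-1)"
      unfolding th0_def r_def[symmetric] by (simp add: inner_add_left Keq)
    have res: "y - th0 y \<bullet> x = r / K"
      unfolding tx' using K1 unfolding r_def by (simp add: field_simps)
    have nrm: "(norm (th0 y))\<^sup>2 = T + 2*(r/K)*B + (r/K)\<^sup>2*p2"
      unfolding th0_def r_def[symmetric] power2_norm_eq_inner T_def B_def p2_def
      by (simp add: inner_add_left inner_add_right inner_commute[of pv \<theta>L] power2_eq_square algebra_simps)
    have ym: "y - m = r + lam*K*B/D" unfolding m_def \<mu>eq r_def by simp
    have "g y = 1 / sqrt (2 * pi * \<sigma>\<^sup>2) * exp (-(1/(2 * \<sigma>\<^sup>2)) * (r/K)\<^sup>2 + -(lam/(2 * \<sigma>\<^sup>2)) * (T + 2*(r/K)*B + (r/K)\<^sup>2*p2))"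
      unfolding g_def gauss_model_def prior_w_def res nrm by (simp add: exp_add exp_diff exp_minus field_simps)
    also have "\<dots> = 1 / sqrt (2 * pi * \<sigma>\<^sup>2) * exp (-(y - m)\<^sup>2/(2 * s2) + E0)"
    proof -
      have "-(1/(2 * \<sigma>\<^sup>2)) * (r/K)\<^sup>2 + -(lam/(2 * \<sigma>\<^sup>2)) * (T + 2*(r/K)*B + (r/K)\<^sup>2*p2)
         = -(y - m)\<^sup>2/(2 * s2) + E0"
        unfolding ym s2eq E0_def by (rule alg) (use K1 D1 assms(2) D_def in auto)
      then show ?thesis by simp
    qed
    also have "\<dots> = Cst * normal_density m (sqrt s2) y"
    proof -
      have e: "exp (-(y - m)\<^sup>2/(2 * s2) + E0) = exp E0 * exp (-(y - m)\<^sup>2/(2 * s2))"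
        by (metis add.commute exp_add)
      have sq: "(sqrt s2)\<^sup>2 = s2" using s2pos by simp
      have "sqrt (2 * pi * s2) > 0" using s2pos by simp
      then show ?thesis unfolding e Cst_def normal_density_def sq using s2pos by simp
    qed
    finally show ?thesis .
  qed
  have int: "(LBINT y'. g y') = Cst" unfolding geq using integral_normal_density[of "sqrt s2" m] s2pos by simp
  show ?thesis
  proof
    fix y
    have "q_LpNML X Y lam \<sigma> x y = g y / (LBINT y'. g y')"
      unfolding q_LpNML_def thy g_def ..
    also have "\<dots> = normal_density m (sqrt s2) y" unfolding int geq[of y] using Cpos by simp
    finally show "q_LpNML X Y lam \<sigma> x y = normal_density (\<theta>L \<bullet> x - \<mu>) (sqrt s2) y" unfolding m_def .
  qed
qed

end
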